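(* Let $\tau,C_1,C_2>0$ and let $y\in C([-\tau,\infty))$ be a nonnegative function, differentiable on $(-\tau,0)$ and continuously differentiable on $(0,\infty)$, such that $$|\dot y(t)|\le C_1y(t)+C_2y(t-\tau)\qquad\text{for all }t>0.$$ Let $$M:=\max\Big\{\sup_{s\in(-\tau,0)}\frac{|\dot y(s)|}{y(s)},\ \frac{|\dot y(0^+)|}{y(0)}\Big\}<\infty,$$ where $\dot y(0^+)$ is the right derivative of $y$ at $0$. If there exists $\kappa>0$ with $$\kappa>\max\{M,\ C_1+C_2e^{\kappa\tau}\},$$ then for all $s,t>0$ with $-\tau<t-s$, $$e^{-\kappa s}y(t)<y(t-s)<e^{\kappa s}y(t).$$ *)

theory Defs
  imports "HOL-Analysis.Analysis"
begin

end

theory Submission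
  imports Defs
begin

lemma L:
  fixes y :: "real \<Rightarrow> real" and a b k :: real
  assumes ab: "a < b" and c: "continuous_on {a..b} y"
    and g: "\<And>x. a < x \<Longrightarrow> x < b \<Longrightarrow> y differentiable (at x) \<and> y x > 0 \<and> \<bar>deriv y x\<bar> < k * y x"
  shows "y a < exp (k*(b-a)) * y b \<and> y b < exp (k*(b-a)) * y a"
proof -
  have D: "(y has_real_derivative deriv y x) (at x)" if "a < x" "x < b" for x
    using g[OF that] DERIV_deriv_iff_real_differentiable by blast
  have c1: "continuous_on {a..b} (\<lambda>x. y x * exp (k*x))"
    by (intro continuous_intros c)
  have c2: "continuous_on {a..b} (\<lambda>x. y x * exp (-k*x))"
    by (intro continuous_intros c)
  have i1: "y a * exp (k*a) < y b * exp (k*b)"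
  proof (rule DERIV_pos_imp_increasing_open[OF ab _ c1])
    fix x assume x: "a < x" "x < b"
    have "((\<lambda>x. y x * exp (k*x)) has_real_derivative (deriv y x * exp (k*x) + y x * (exp (k*x) * k))) (at x)"
      by (intro derivative_eq_intros D[OF x]) (auto intro: D[OF x])
    moreover have "deriv y x * exp (k*x) + y x * (exp (k*x) * k) > 0"
    proof -
      have "deriv y x + k * y x > 0" using g[OF x] by linarith
      hence "(deriv y x + k * y x) * exp (k*x) > 0" by simp
      thus ?thesis by (simp add: algebra_simps)
    qed
    ultimately show "\<exists>z. ((\<lambda>x. y x * exp (k*x)) has_real_derivative z) (at x) \<and> z > 0" by blast
  qed
  have i2: "y b * exp (-k*b) < y a * exp (-k*a)"
  proof (rule DERIV_neg_imp_decreasing_open[OF ab _ c2])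
    fix x assume x: "a < x" "x < b"
    have "((\<lambda>x. y x * exp (-k*x)) has_real_derivative (deriv y x * exp (-k*x) + y x * (exp (-k*x) * (-k)))) (at x)"
      by (intro derivative_eq_intros D[OF x]) (auto intro: D[OF x])
    moreover have "deriv y x * exp (-k*x) + y x * (exp (-k*x) * (-k)) < 0"
    proof -
      have "deriv y x - k * y x < 0" using g[OF x] by linarith
      hence "(deriv y x - k * y x) * exp (-k*x) < 0" by (simp add: mult_neg_pos)
      thus ?thesis by (simp add: algebra_simps)
    qed
    ultimately show "\<exists>z. ((\<lambda>x. y x * exp (-k*x)) has_real_derivative z) (at x) \<and> z < 0" by blast
  qed
  have e1: "exp (k*(b-a)) = exp (k*b) * exp (-k*a)" by (simp add: algebra_simps flip: exp_add)
  have "y a = y a * exp (k*a) * exp (-k*a)" by (simp flip: exp_add)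
  also have "\<dots> < y b * exp (k*b) * exp (-k*a)" using i1 by simp
  also have "\<dots> = exp (k*(b-a)) * y b" using e1 by simp
  finally have r1: "y a < exp (k*(b-a)) * y b" .
  have e2: "exp (k*(b-a)) = exp (-k*a) * exp (k*b)" by (simp add: algebra_simps flip: exp_add)
  have "y b = y b * exp (-k*b) * exp (k*b)" by (simp flip: exp_add)
  also have "\<dots> < y a * exp (-k*a) * exp (k*b)" using i2 by simp
  also have "\<dots> = exp (k*(b-a)) * y a" using e2 by simp
  finally show ?thesis using r1 by simp
qed

lemma L2:
  fixes y :: "real \<Rightarrow> real" and a b k :: real
  assumes ab: "a < b" and c: "continuous_on {a..b} y"
    and g: "\<And>x. a < x \<Longrightarrow> x < b \<Longrightarrow> x \<noteq> 0 \<Longrightarrow> y differentiable (at x) \<and> y x > 0 \<and> \<bar>deriv y x\<bar> < k * y x"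
  shows "y a < exp (k*(b-a)) * y b \<and> y b < exp (k*(b-a)) * y a"
proof (cases "a < 0 \<and> 0 < b")
  case False
  show ?thesis
    by (rule L[OF ab c]) (use g False in force)
next
  case True
  have h1: "y a < exp (k*(0-a)) * y 0 \<and> y 0 < exp (k*(0-a)) * y a"
    by (rule L) (use True c g in \<open>auto intro: continuous_on_subset\<close>)
  have h2: "y 0 < exp (k*(b-0)) * y b \<and> y b < exp (k*(b-0)) * y 0"
    by (rule L) (use True c g in \<open>auto intro: continuous_on_subset\<close>)
  have e: "exp (k*(b-a)) = exp (k*(0-a)) * exp (k*(b-0))" by (simp add: algebra_simps flip: exp_add)
  have "y a < exp (k*(0-a)) * y 0" using h1 by blast
  also have "\<dots> < exp (k*(0-a)) * (exp (k*(b-0)) * y b)" using h2 by simp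
  finally have r1: "y a < exp (k*(b-a)) * y b" using e by (simp add: mult.assoc)
  have "y b < exp (k*(b-0)) * y 0" using h2 by blast
  also have "\<dots> < exp (k*(b-0)) * (exp (k*(0-a)) * y a)" using h1 by simp
  finally have r2: "y b < exp (k*(b-a)) * y a" using e by (simp add: ac_simps)
  show ?thesis using r1 r2 by blast
qed



theorem lemma3p5:
  fixes y :: "real \<Rightarrow> real" and \<tau> C1 C2 \<kappa> D0 :: real
  assumes tau_pos: "\<tau> > 0" and C1_pos: "C1 > 0" and C2_pos: "C2 > 0"
    and cont: "continuous_on {-\<tau>..} y"
    and nonneg: "\<forall>t\<ge>-\<tau>. y t \<ge> 0"
    and pos_hist: "\<forall>s\<in>{-\<tau><..0}. y s > 0"
    and diff_hist: "\<forall>s\<in>{-\<tau><..<0}. y differentiable (at s)"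
    and diff_pos: "\<forall>t>0. y differentiable (at t)"
    and cont_deriv: "continuous_on {0<..} (deriv y)"
    and right_deriv: "(y has_real_derivative D0) (at_right 0)"
    and ineq: "\<forall>t>0. \<bar>deriv y t\<bar> \<le> C1 * y t + C2 * y (t - \<tau>)"
    and M_finite: "bdd_above ((\<lambda>s. \<bar>deriv y s\<bar> / y s) ` {-\<tau><..<0})"
    and kappa_pos: "\<kappa> > 0"
    and kappa_M: "\<kappa> > max (Sup ((\<lambda>s. \<bar>deriv y s\<bar> / y s) ` {-\<tau><..<0})) (\<bar>D0\<bar> / y 0)"
    and kappa_C: "\<kappa> > C1 + C2 * exp (\<kappa> * \<tau>)"
  shows "\<forall>s t. s > 0 \<longrightarrow> t > 0 \<longrightarrow> -\<tau> < t - s \<longrightarrow>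
           exp (-\<kappa> * s) * y t < y (t - s) \<and> y (t - s) < exp (\<kappa> * s) * y t"
proof -
  define Mx where "Mx = Sup ((\<lambda>s. \<bar>deriv y s\<bar> / y s) ` {-\<tau><..<0})"
  have Mx: "Mx < \<kappa>" using kappa_M unfolding Mx_def by simp
  have goodH: "y differentiable (at x) \<and> y x > 0 \<and> \<bar>deriv y x\<bar> < \<kappa> * y x"
    if "-\<tau> < x" "x < 0" for x
  proof -
    have yp: "y x > 0" using pos_hist that by auto
    have "\<bar>deriv y x\<bar> / y x \<le> Mx" unfolding Mx_def
      by (rule cSup_upper) (use that M_finite in auto)
    hence "\<bar>deriv y x\<bar> / y x < \<kappa>" using Mx by linarith
    hence "\<bar>deriv y x\<bar> < \<kappa> * y x" using yp by (simp add: divide_less_eq)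
    thus ?thesis using yp diff_hist that by auto
  qed
  have goodP: "y differentiable (at u) \<and> y u > 0 \<and> \<bar>deriv y u\<bar> < \<kappa> * y u"
    if "u > 0" "y u > 0" "y (u - \<tau>) < exp (\<kappa>*\<tau>) * y u" for u
  proof -
    have "\<bar>deriv y u\<bar> \<le> C1 * y u + C2 * y (u - \<tau>)" using ineq that by auto
    also have "\<dots> < C1 * y u + C2 * (exp (\<kappa>*\<tau>) * y u)" using that C2_pos by simp
    also have "\<dots> = (C1 + C2 * exp (\<kappa> * \<tau>)) * y u" by (simp add: algebra_simps)
    also have "\<dots> < \<kappa> * y u" using kappa_C that by (simp add: mult_strict_right_mono)
    finally show ?thesis using that diff_pos by auto
  qed
  have cy0: "continuous_on {0..} y" by (rule continuous_on_subset[OF cont]) (use tau_pos in auto)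
  have cyt: "continuous_on {0..} (\<lambda>u. y (u - \<tau>))"
    by (rule continuous_on_compose2[OF cont]) (auto intro!: continuous_intros)
  have cyab: "continuous_on {a..b} y" if "-\<tau> \<le> a" for a b
    by (rule continuous_on_subset[OF cont]) (use that in auto)
  have A: "\<forall>t>0. y t > 0 \<and> y (t - \<tau>) < exp (\<kappa>*\<tau>) * y t"
  proof (rule ccontr)
    assume nt: "\<not> ?thesis"
    define S where "S = {t. t > 0 \<and> \<not> (y t > 0 \<and> y (t - \<tau>) < exp (\<kappa>*\<tau>) * y t)}"
    have Sne: "S \<noteq> {}" using nt unfolding S_def by auto
    have Sbdd: "bdd_below S" unfolding S_def by (rule bdd_belowI[of _ 0]) auto
    define ts where "ts = Inf S"
    have ts0: "ts \<ge> 0" unfolding ts_def by (rule cInf_greatest[OF Sne]) (auto simp: S_def)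
    have below: "y differentiable (at u) \<and> y u > 0 \<and> \<bar>deriv y u\<bar> < \<kappa> * y u" if "0 < u" "u < ts" for u
    proof -
      have "u \<notin> S"
      proof
        assume "u \<in> S"
        hence "ts \<le> u" unfolding ts_def by (rule cInf_lower[OF _ Sbdd])
        thus False using that by simp
      qed
      thus ?thesis using goodP that unfolding S_def by auto
    qed
    have Pts: "y ts > 0 \<and> y (ts - \<tau>) < exp (\<kappa>*\<tau>) * y ts"
    proof (cases "ts = 0")
      case True
      have "y (-\<tau>) < exp (\<kappa>*(0 - -\<tau>)) * y 0 \<and> y 0 < exp (\<kappa>*(0 - -\<tau>)) * y (-\<tau>)"
      proof (rule L2)
        show "-\<tau> < 0" using tau_pos by simp
        show "continuous_on {-\<tau>..0} y" by (rule cyab) simp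
        fix x assume x: "-\<tau> < x" "x < 0" "x \<noteq> 0"
        show "y differentiable (at x) \<and> y x > 0 \<and> \<bar>deriv y x\<bar> < \<kappa> * y x"
          using goodH[of x] x by blast
      qed
      moreover have "y 0 > 0" using pos_hist tau_pos by auto
      ultimately show ?thesis using True by simp
    next
      case False
      hence tsp: "ts > 0" using ts0 by simp
      have "y 0 < exp (\<kappa>*(ts - 0)) * y ts \<and> y ts < exp (\<kappa>*(ts - 0)) * y 0"
      proof (rule L2)
        show "0 < ts" using tsp by simp
        show "continuous_on {0..ts} y" by (rule cyab) (use tau_pos in simp)
        fix x assume x: "0 < x" "x < ts" "x \<noteq> 0"
        show "y differentiable (at x) \<and> y x > 0 \<and> \<bar>deriv y x\<bar> < \<kappa> * y x"
          using below[of x] x by blast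
      qed
      moreover have "y 0 > 0" using pos_hist tau_pos by auto
      ultimately have "exp (\<kappa>*(ts - 0)) * y ts > 0" by linarith
      hence y1: "y ts > 0" by (simp add: zero_less_mult_iff)
      have "y (ts - \<tau>) < exp (\<kappa>*(ts - (ts - \<tau>))) * y ts \<and> y ts < exp (\<kappa>*(ts - (ts - \<tau>))) * y (ts - \<tau>)"
      proof (rule L2)
        show "ts - \<tau> < ts" using tau_pos by simp
        show "continuous_on {ts - \<tau>..ts} y" by (rule cyab) (use tsp in simp)
        fix x assume x: "ts - \<tau> < x" "x < ts" "x \<noteq> 0"
        show "y differentiable (at x) \<and> y x > 0 \<and> \<bar>deriv y x\<bar> < \<kappa> * y x"
        proof (cases "x < 0")
          case True thus ?thesis using goodH x tsp by auto
        next
          case False thus ?thesis using below x by auto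
        qed
      qed
      thus ?thesis using y1 by simp
    qed
    define F where "F = (\<lambda>u. min (y u) (exp (\<kappa>*\<tau>) * y u - y (u - \<tau>)))"
    have cF: "continuous_on {0..} F" unfolding F_def
      by (intro continuous_intros cy0 cyt)
    have Fts: "F ts > 0" using Pts unfolding F_def by simp
    obtain d where d: "d > 0" "\<forall>x'\<in>{0..}. dist x' ts < d \<longrightarrow> dist (F x') (F ts) < F ts"
    proof -
      have "\<forall>x\<in>{0..}. \<forall>e>0. \<exists>d>0. \<forall>x'\<in>{0..}. dist x' x < d \<longrightarrow> dist (F x') (F x) < e"
        using cF unfolding continuous_on_iff .
      hence "\<forall>e>0. \<exists>d>0. \<forall>x'\<in>{0..}. dist x' ts < d \<longrightarrow> dist (F x') (F ts) < e"
        using ts0 by simp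
      hence "\<exists>d>0. \<forall>x'\<in>{0..}. dist x' ts < d \<longrightarrow> dist (F x') (F ts) < F ts"
        using Fts by blast
      thus ?thesis using that by blast
    qed
    obtain s where s: "s \<in> S" "s < ts + d"
      using cInf_less_iff[OF Sne Sbdd, of "ts + d"] d(1) unfolding ts_def by auto
    have "ts \<le> s" unfolding ts_def by (rule cInf_lower[OF s(1) Sbdd])
    hence "dist s ts < d" using s d by (simp add: dist_real_def)
    moreover have "s \<ge> 0" using s unfolding S_def by auto
    ultimately have "dist (F s) (F ts) < F ts" using d by auto
    hence "F s > 0" by (simp add: dist_real_def)
    thus False using s(1) unfolding S_def F_def by auto
  qed
  show ?thesis
  proof (intro allI impI)
    fix s t :: real assume st: "s > 0" "t > 0" "-\<tau> < t - s"
    have "y (t - s) < exp (\<kappa>*(t - (t - s))) * y t \<and> y t < exp (\<kappa>*(t - (t - s))) * y (t - s)"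
    proof (rule L2)
      show "t - s < t" using st by simp
      show "continuous_on {t - s..t} y" by (rule cyab) (use st in simp)
      fix x assume x: "t - s < x" "x < t" "x \<noteq> 0"
      show "y differentiable (at x) \<and> y x > 0 \<and> \<bar>deriv y x\<bar> < \<kappa> * y x"
      proof (cases "x < 0")
        case True thus ?thesis using goodH x st by auto
      next
        case False thus ?thesis using goodP A x by auto
      qed
    qed
    hence r: "y (t - s) < exp (\<kappa> * s) * y t" "y t < exp (\<kappa> * s) * y (t - s)" by auto
    have "exp (-\<kappa> * s) * y t < exp (-\<kappa> * s) * (exp (\<kappa> * s) * y (t - s))"
      using r(2) by simp
    also have "\<dots> = y (t - s)" by (simp add: mult.assoc[symmetric] flip: exp_add)
    finally show "exp (-\<kappa> * s) * y t < y (t - s) \<and> y (t - s) < exp (\<kappa> * s) * y t"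
      using r(1) by simp
  qed
qed

end
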